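(* Consider the algorithm (Laplacian differentially private consensus) described in the context. Define the scalar random variable $$\theta_\infty=\mathrm{Ave}(\theta_0)+\sum_{i=1}^n\frac{s_i}{n}\sum_{j=0}^\infty\eta_i(j).$$ Then the series $\sum_{j=0}^\infty\eta_i(j)$ converges almost surely for every $i$ (so $\theta_\infty$ is well defined a.s.), and $\theta(k)\to\theta_\infty\mathbf{1}_n$ almost surely as $k\to\infty$, for every initial state $\theta_0\in\mathbb{R}^n$.
   Context: $n$ agents communicate over an undirected connected weighted graph with symmetric nonnegative adjacency matrix $A$, weighted degree matrix $D=\mathrm{diag}(A\mathbf{1}_n)$, Laplacian $L=D-A$, and maximal weighted degree $d_{\max}$. $\mathrm{Ave}(x)=\frac1n\mathbf{1}_n^Tx$. The algorithm is $$\theta(k+1)=\theta(k)-hLx(k)+S\eta(k),\qquad x(k)=\theta(k)+\eta(k),\qquad \theta(0)=\theta_0,$$ where $0<h<1/d_{\max}$, $S=\mathrm{diag}(s_1,\dots,s_n)$ with $s_i\in(0,2)$, and the noises $\eta_i(k)$, $i\in\{1,\dots,n\}$, $k\in\mathbb{Z}_{\ge0}$, are mutually independent with $\eta_i(k)\sim\mathrm{Lap}(b_i(k))$ (zero-mean Laplace with density $\frac{1}{2b}e^{-|x|/b}$), $b_i(k)=c_iq_i^k$, $c_i>0$, $q_i\in(|s_i-1|,1)$. *)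

theory Defs
  imports "HOL-Probability.Probability"
begin

text \<open>Agents are indexed by 0..n-1; vectors in R^n are functions nat => real
  (only the entries with index < n matter); matrices are nat => nat => real.\<close>

definition wdeg :: "nat \<Rightarrow> (nat \<Rightarrow> nat \<Rightarrow> real) \<Rightarrow> nat \<Rightarrow> real" where
  "wdeg n A i = (\<Sum>j<n. A i j)"

definition dmax :: "nat \<Rightarrow> (nat \<Rightarrow> nat \<Rightarrow> real) \<Rightarrow> real" where
  "dmax n A = Max (wdeg n A ` {..<n})"

definition laplacian :: "nat \<Rightarrow> (nat \<Rightarrow> nat \<Rightarrow> real) \<Rightarrow> nat \<Rightarrow> nat \<Rightarrow> real" where
  "laplacian n A i j = (if i = j then wdeg n A i else 0) - A i j"

definition connected_wgraph :: "nat \<Rightarrow> (nat \<Rightarrow> nat \<Rightarrow> real) \<Rightarrow> bool" where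
  "connected_wgraph n A \<longleftrightarrow>
     (\<forall>i<n. \<forall>j<n. A i j = A j i \<and> 0 \<le> A i j) \<and>
     (\<forall>i<n. \<forall>j<n. (i, j) \<in> {(a, b). a < n \<and> b < n \<and> 0 < A a b}\<^sup>*)"

definition Ave :: "nat \<Rightarrow> (nat \<Rightarrow> real) \<Rightarrow> real" where
  "Ave n x = (\<Sum>i<n. x i) / real n"

definition lap_density :: "real \<Rightarrow> real \<Rightarrow> real" where
  "lap_density b x = exp (- \<bar>x\<bar> / b) / (2 * b)"

text \<open>The state of the algorithm for a given realization eta (eta i k = eta_i(k)):
  theta(k+1) = theta(k) - h L x(k) + S eta(k),  x(k) = theta(k) + eta(k).\<close>
primrec dp_theta :: "nat \<Rightarrow> (nat \<Rightarrow> nat \<Rightarrow> real) \<Rightarrow> real \<Rightarrow> (nat \<Rightarrow> real)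
    \<Rightarrow> (nat \<Rightarrow> real) \<Rightarrow> (nat \<Rightarrow> nat \<Rightarrow> real) \<Rightarrow> nat \<Rightarrow> nat \<Rightarrow> real" where
  "dp_theta n A h s theta0 eta 0 = theta0"
| "dp_theta n A h s theta0 eta (Suc k) =
     (\<lambda>i. dp_theta n A h s theta0 eta k i
          - h * (\<Sum>j<n. laplacian n A i j * (dp_theta n A h s theta0 eta k j + eta j k))
          + s i * eta i k)"

end

theory Submission
  imports Defs
begin


lemma half_sum: "0 \<le> (a::real) \<Longrightarrow> 0 \<le> b \<Longrightarrow> ennreal (1/2 * (a + b)) = ennreal (1/2) * (ennreal a + ennreal b)"
  by (metis ennreal_mult ennreal_plus add_nonneg_nonneg divide_nonneg_nonneg zero_le_one zero_le_numeral)

lemma lap_abs_moment: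
  assumes b: "0 < (b::real)"
  shows "(\<integral>\<^sup>+x. ennreal (lap_density b x) * ennreal \<bar>x\<bar> \<partial>lborel) = ennreal b"
proof -
  let ?g = "\<lambda>x::real. ennreal (erlang_density 0 (1/b) x * x ^ 1)"
  have G0: "0 \<le> erlang_density 0 (1/b) x * x ^ 1" for x
    using b by (auto simp: erlang_density_def)
  have eq: "ennreal (lap_density b x) * ennreal \<bar>x\<bar> = ennreal (1/2) * (?g x + ?g (0 + (-1) * x))" for x
  proof -
    have "ennreal (lap_density b x) * ennreal \<bar>x\<bar> = ennreal (lap_density b x * \<bar>x\<bar>)"
      using b by (simp add: ennreal_mult''[symmetric] lap_density_def)
    moreover have "ennreal (1/2) * (?g x + ?g (0 + (-1) * x)) =
       ennreal (1/2 * (erlang_density 0 (1/b) x * x ^ 1 + erlang_density 0 (1/b) (0 + (-1) * x) * (0 + (-1) * x) ^ 1))"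
      using half_sum[OF G0[of x] G0[of "0 + (-1) * x"]] by simp
    moreover have "lap_density b x * \<bar>x\<bar> = 1/2 * (erlang_density 0 (1/b) x * x ^ 1 + erlang_density 0 (1/b) (0 + (-1) * x) * (0 + (-1) * x) ^ 1)"
      using b by (cases "x < 0"; cases "x = 0") (auto simp: lap_density_def erlang_density_def field_simps)
    ultimately show ?thesis by simp
  qed
  have m: "?g \<in> borel_measurable borel" by measurable
  have "(\<integral>\<^sup>+x. ennreal (lap_density b x) * ennreal \<bar>x\<bar> \<partial>lborel)
      = ennreal (1/2) * ((\<integral>\<^sup>+x. ?g x \<partial>lborel) + (\<integral>\<^sup>+x. ?g (0 + (-1) * x) \<partial>lborel))"
    by (simp only: eq, subst nn_integral_cmult, simp, subst nn_integral_add, auto)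
  also have "(\<integral>\<^sup>+x. ?g (0 + (-1) * x) \<partial>lborel) = (\<integral>\<^sup>+x. ?g x \<partial>lborel)"
    using nn_integral_real_affine[OF m, of "-1" 0] by simp
  also have "(\<integral>\<^sup>+x. ?g x \<partial>lborel) = ennreal b"
    using nn_integral_erlang_ith_moment[of "1/b" 0 1] b by simp
  also have "ennreal (1/2) * (ennreal b + ennreal b) = ennreal b"
    using half_sum[of b b] b by simp
  finally show ?thesis .
qed

lemma summable_noise:
  assumes P: "prob_space M" and q: "0 < q" "q < 1" and c: "0 < c"
    and D: "\<forall>k. distributed M lborel (X k) (\<lambda>x. ennreal (lap_density (c * q ^ k) x))"
  shows "AE \<omega> in M. summable (\<lambda>j. X j \<omega>)"
proof -
  have meas: "X k \<in> borel_measurable M" for k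
    using D distributed_measurable by (metis measurable_lborel1)
  have int: "(\<integral>\<^sup>+\<omega>. ennreal \<bar>X k \<omega>\<bar> \<partial>M) = ennreal (c * q ^ k)" for k
  proof -
    have "(\<integral>\<^sup>+\<omega>. ennreal \<bar>X k \<omega>\<bar> \<partial>M) = (\<integral>\<^sup>+x. ennreal (lap_density (c * q ^ k) x) * ennreal \<bar>x\<bar> \<partial>lborel)"
      using distributed_nn_integral[OF D[rule_format, of k], of "\<lambda>x. ennreal \<bar>x\<bar>"] by simp
    also have "\<dots> = ennreal (c * q ^ k)"
      by (rule lap_abs_moment) (use q c in simp)
    finally show ?thesis .
  qed
  have sg: "summable (\<lambda>k. c * q ^ k)"
    using q by (intro summable_mult summable_geometric) simp
  have "(\<integral>\<^sup>+\<omega>. (\<Sum>k. ennreal \<bar>X k \<omega>\<bar>) \<partial>M) = (\<Sum>k. ennreal (c * q ^ k))"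
    using meas by (subst nn_integral_suminf) (auto simp: int)
  also have "\<dots> = ennreal (\<Sum>k. c * q ^ k)"
    using sg q c by (intro suminf_ennreal2) auto
  finally have "(\<integral>\<^sup>+\<omega>. (\<Sum>k. ennreal \<bar>X k \<omega>\<bar>) \<partial>M) \<noteq> \<infinity>" by simp
  then have "AE \<omega> in M. (\<Sum>k. ennreal \<bar>X k \<omega>\<bar>) \<noteq> \<infinity>"
    using meas by (intro nn_integral_noteq_infinite) auto
  then show ?thesis
  proof eventually_elim
    fix \<omega> assume "(\<Sum>k. ennreal \<bar>X k \<omega>\<bar>) \<noteq> \<infinity>"
    then have "summable (\<lambda>k. \<bar>X k \<omega>\<bar>)" by (intro summable_suminf_not_top) auto
    then show "summable (\<lambda>j. X j \<omega>)" by (rule summable_rabs_cancel)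
  qed
qed



lemma seq_contract:
  fixes a b :: "nat \<Rightarrow> real"
  assumes a0: "\<forall>k. 0 \<le> a k" and rec: "\<forall>k. a (k + m) \<le> r * a k + b k"
    and r: "0 \<le> r" "r < 1" and m: "0 < m" and b: "b \<longlonglongrightarrow> 0"
  shows "a \<longlonglongrightarrow> 0"
proof (rule LIMSEQ_I)
  fix e :: real assume e: "0 < e"
  have "0 < e/3 * (1 - r)" using e r by simp
  from LIMSEQ_D[OF b this] obtain K where K: "\<forall>k\<ge>K. norm (b k - 0) < e/3 * (1 - r)" by blast
  define C where "C = (\<Sum>j<m. a (K + j))"
  have C0: "0 \<le> C" unfolding C_def using a0 by (simp add: sum_nonneg)
  have blk: "\<forall>j<m. a (K + j + m * t) \<le> r ^ t * C + e/3" for t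
  proof (induction t)
    case 0
    show ?case
    proof (intro allI impI)
      fix j assume "j < m"
      then have "a (K + j) \<le> C" unfolding C_def
        by (intro member_le_sum) (use a0 in auto)
      then show "a (K + j + m * 0) \<le> r ^ 0 * C + e/3" using e by simp
    qed
  next
    case (Suc t)
    show ?case
    proof (intro allI impI)
      fix j assume j: "j < m"
      have "a (K + j + m * Suc t) = a ((K + j + m * t) + m)" by (simp add: algebra_simps)
      also have "\<dots> \<le> r * a (K + j + m * t) + b (K + j + m * t)" using rec by blast
      also have "\<dots> \<le> r * (r ^ t * C + e/3) + e/3 * (1 - r)"
      proof (rule add_mono)
        show "r * a (K + j + m * t) \<le> r * (r ^ t * C + e / 3)"
          using Suc.IH j r by (intro mult_left_mono) auto
        show "b (K + j + m * t) \<le> e / 3 * (1 - r)" using K[rule_format, of "K + j + m * t"] by simp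
      qed
      also have "\<dots> = r ^ Suc t * C + e/3" by (simp add: field_simps)
      finally show "a (K + j + m * Suc t) \<le> r ^ Suc t * C + e / 3" .
    qed
  qed
  have "(\<lambda>t. r ^ t * C) \<longlonglongrightarrow> 0"
    using r by (intro tendsto_mult_left_zero LIMSEQ_power_zero) simp
  from LIMSEQ_D[OF this, of "e/3"] e obtain T where T: "\<forall>t\<ge>T. norm (r ^ t * C - 0) < e/3" by auto
  show "\<exists>no. \<forall>k\<ge>no. norm (a k - 0) < e"
  proof (intro exI allI impI)
    fix k assume k: "K + m * T \<le> k"
    define t where "t = (k - K) div m"
    define j where "j = (k - K) mod m"
    have kK: "K \<le> k" using k by simp
    have "k - K = j + m * t" unfolding j_def t_def by (rule mod_mult_div_eq[symmetric])
    then have kk: "k = K + j + m * t" using kK by simp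
    have jm: "j < m" unfolding j_def using m by simp
    have "m * T \<le> k - K" using k by simp
    then have "(m * T) div m \<le> (k - K) div m" by (rule div_le_mono)
    then have tT: "T \<le> t" unfolding t_def using m by simp
    have "a (K + j + m * t) \<le> r ^ t * C + e/3" using blk[of t] jm by blast
    then have "a k \<le> r ^ t * C + e/3" using kk by simp
    also have "\<dots> < e/3 + e/3" using T tT C0 r by (auto simp: abs_less_iff)
    finally show "norm (a k - 0) < e" using a0 e by simp
  qed
qed

locale cons =
  fixes n :: nat and A :: "nat \<Rightarrow> nat \<Rightarrow> real" and h :: real
  assumes n1: "n \<ge> 1" and conn: "connected_wgraph n A" and h0: "0 < h" and hd: "h * dmax n A < 1"
begin

definition P where "P i j = (if i = j then 1 else 0) - h * laplacian n A i j"
definition Pop where "Pop v = (\<lambda>i. \<Sum>j<n. P i j * v j)"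
lemma Pop_apply: "Pop v i = (\<Sum>j<n. P i j * v j)" by (simp add: Pop_def)

definition spr :: "(nat \<Rightarrow> real) \<Rightarrow> real" where
  "spr v = Max (v ` {..<n}) - Min (v ` {..<n})"

lemma symA: "i < n \<Longrightarrow> j < n \<Longrightarrow> A i j = A j i"
  using conn unfolding connected_wgraph_def by blast
lemma nnA: "i < n \<Longrightarrow> j < n \<Longrightarrow> 0 \<le> A i j"
  using conn unfolding connected_wgraph_def by blast

lemma wdeg_le: "i < n \<Longrightarrow> wdeg n A i \<le> dmax n A"
  unfolding dmax_def by (intro Max_ge) auto

lemma L_row: "i < n \<Longrightarrow> (\<Sum>j<n. laplacian n A i j) = 0"
  by (simp add: laplacian_def sum_subtractf wdeg_def)

lemma L_col: "j < n \<Longrightarrow> (\<Sum>i<n. laplacian n A i j) = 0"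
proof -
  assume j: "j < n"
  have "(\<Sum>i<n. A i j) = (\<Sum>i<n. A j i)" using j by (intro sum.cong) (auto simp: symA)
  then show ?thesis using j by (simp add: laplacian_def sum_subtractf wdeg_def)
qed

lemma P_diag: "i < n \<Longrightarrow> 1 - h * dmax n A \<le> P i i"
proof -
  assume i: "i < n"
  have "h * wdeg n A i \<le> h * dmax n A" using wdeg_le[OF i] h0 by simp
  moreover have "0 \<le> h * A i i" using nnA[OF i i] h0 by simp
  ultimately show ?thesis by (simp add: P_def laplacian_def algebra_simps)
qed

lemma P_off: "i \<noteq> j \<Longrightarrow> P i j = h * A i j"
  by (simp add: P_def laplacian_def)

lemma P_nonneg: "i < n \<Longrightarrow> j < n \<Longrightarrow> 0 \<le> P i j"
  using P_diag[of i] hd nnA[of i j] h0 P_off[of i j] by (cases "i = j") auto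

lemma P_row: "i < n \<Longrightarrow> (\<Sum>j<n. P i j) = 1"
  using L_row[of i] by (simp add: P_def sum_subtractf sum_distrib_left[symmetric])

lemma Pop_affine: "i < n \<Longrightarrow> (Pop ^^ k) (\<lambda>j. a * v j + b) i = a * (Pop ^^ k) v i + b"
proof (induction k arbitrary: i)
  case 0 then show ?case by simp
next
  case (Suc k)
  have "(Pop ^^ Suc k) (\<lambda>j. a * v j + b) i = (\<Sum>j<n. P i j * (a * (Pop ^^ k) v j + b))"
    by (simp only: funpow.simps comp_apply Pop_apply) (intro sum.cong, auto simp: Suc.IH)
  also have "\<dots> = a * (\<Sum>j<n. P i j * (Pop ^^ k) v j) + b * (\<Sum>j<n. P i j)"
    by (simp add: sum.distrib sum_distrib_left algebra_simps)
  also have "\<dots> = a * (Pop ^^ Suc k) v i + b" using P_row[OF Suc.prems] by (simp add: Pop_apply)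
  finally show ?case .
qed

lemma Pop_nonneg: "(\<forall>j<n. 0 \<le> v j) \<Longrightarrow> i < n \<Longrightarrow> 0 \<le> (Pop ^^ k) v i"
proof (induction k arbitrary: i)
  case 0 then show ?case by simp
next
  case (Suc k)
  then show ?case by (simp only: funpow.simps comp_apply Pop_apply) (auto intro!: sum_nonneg mult_nonneg_nonneg P_nonneg)
qed

lemma Pop_ge_entry: "(\<forall>j<n. 0 \<le> v j) \<Longrightarrow> i < n \<Longrightarrow> l < n \<Longrightarrow> P i l * v l \<le> Pop v i"
  unfolding Pop_def by (rule member_le_sum) (auto intro!: mult_nonneg_nonneg P_nonneg)

definition amin where "amin = Min (insert 1 {A i j | i j. i < n \<and> j < n \<and> 0 < A i j})"
definition \<delta> where "\<delta> = min (1 - h * dmax n A) (h * amin)"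

lemma fin_apos: "finite {A i j | i j. i < n \<and> j < n \<and> 0 < A i j}"
proof -
  have "{A i j | i j. i < n \<and> j < n \<and> 0 < A i j} \<subseteq> (\<lambda>(i,j). A i j) ` ({..<n} \<times> {..<n})" by auto
  then show ?thesis by (rule finite_subset) auto
qed

lemma amin_pos: "0 < amin"
  unfolding amin_def using fin_apos by (subst Min_gr_iff) auto

lemma amin_le: "i < n \<Longrightarrow> j < n \<Longrightarrow> 0 < A i j \<Longrightarrow> amin \<le> A i j"
  unfolding amin_def using fin_apos by (intro Min_le) auto

lemma delta_pos: "0 < \<delta>"
  unfolding \<delta>_def using hd h0 amin_pos by simp

lemma delta_le: "i < n \<Longrightarrow> j < n \<Longrightarrow> i = j \<or> 0 < A i j \<Longrightarrow> \<delta> \<le> P i j"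
proof -
  assume ij: "i < n" "j < n" "i = j \<or> 0 < A i j"
  show ?thesis
  proof (cases "i = j")
    case True then show ?thesis using P_diag[of i] ij unfolding \<delta>_def by auto
  next
    case False
    then have "0 < A i j" using ij by auto
    then have "h * amin \<le> h * A i j" using amin_le ij h0 by simp
    then show ?thesis using False P_off[of i j] unfolding \<delta>_def by auto
  qed
qed

definition R where "R = {(a, b). a < n \<and> b < n \<and> 0 < A a b}"

lemma walk: "(i, j) \<in> R ^^ k \<Longrightarrow> i < n \<Longrightarrow> j < n \<Longrightarrow> (\<forall>l<n. 0 \<le> v l) \<Longrightarrow> \<delta> ^ k * v j \<le> (Pop ^^ k) v i"
proof (induction k arbitrary: j v)
  case 0 then show ?case by simp
next
  case (Suc k)
  from Suc.prems(1) obtain l where il: "(i, l) \<in> R ^^ k" and lj: "(l, j) \<in> R" by auto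
  have l: "l < n" "0 < A l j" using lj by (auto simp: R_def)
  have pv: "\<forall>l<n. 0 \<le> Pop v l" using Pop_nonneg[of v _ 1] Suc.prems by simp
  have "\<delta> * v j \<le> P l j * v j" using delta_le[of l j] l Suc.prems by (intro mult_right_mono) auto
  also have "\<dots> \<le> Pop v l" using Pop_ge_entry[of v l j] Suc.prems l by auto
  finally have 1: "\<delta> * v j \<le> Pop v l" .
  have "\<delta> ^ Suc k * v j = \<delta> ^ k * (\<delta> * v j)" by simp
  also have "\<dots> \<le> \<delta> ^ k * Pop v l" using 1 delta_pos by (intro mult_left_mono) auto
  also have "\<dots> \<le> (Pop ^^ k) (Pop v) i" using Suc.IH[OF il Suc.prems(2) l(1) pv] .
  also have "\<dots> = (Pop ^^ Suc k) v i" by (simp add: funpow_Suc_right del: funpow.simps)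
  finally show ?case .
qed

lemma pad: "(\<forall>l<n. 0 \<le> v l) \<Longrightarrow> i < n \<Longrightarrow> 0 \<le> x \<Longrightarrow> x \<le> (Pop ^^ k) v i \<Longrightarrow> \<delta> ^ d * x \<le> (Pop ^^ (d + k)) v i"
proof (induction d)
  case 0 then show ?case by simp
next
  case (Suc d)
  have nn: "0 \<le> (Pop ^^ (d + k)) v i" using Pop_nonneg Suc.prems by blast
  have "\<delta> ^ Suc d * x = \<delta> * (\<delta> ^ d * x)" by simp
  also have "\<dots> \<le> \<delta> * (Pop ^^ (d + k)) v i" using Suc delta_pos by (intro mult_left_mono) auto
  also have "\<dots> \<le> P i i * (Pop ^^ (d + k)) v i" using delta_le[of i i] Suc.prems nn by (intro mult_right_mono) auto
  also have "\<dots> \<le> Pop ((Pop ^^ (d + k)) v) i"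
    using Pop_ge_entry[of "(Pop ^^ (d + k)) v" i i] Pop_nonneg[of v _ "d+k"] Suc.prems by auto
  finally show ?case by simp
qed

lemma uniform: "\<exists>m>0. \<forall>v. (\<forall>l<n. 0 \<le> v l) \<longrightarrow> (\<forall>i<n. \<forall>j<n. \<delta> ^ m * v j \<le> (Pop ^^ m) v i)"
proof -
  have "\<forall>i j. \<exists>k. i < n \<longrightarrow> j < n \<longrightarrow> (i, j) \<in> R ^^ k"
  proof (intro allI)
    fix i j
    show "\<exists>k. i < n \<longrightarrow> j < n \<longrightarrow> (i, j) \<in> R ^^ k"
    proof (cases "i < n \<and> j < n")
      case True
      then have "(i, j) \<in> R\<^sup>*" using conn unfolding connected_wgraph_def R_def by blast
      then show ?thesis using rtrancl_power by blast
    qed auto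
  qed
  then obtain K where K: "\<And>i j. i < n \<Longrightarrow> j < n \<Longrightarrow> (i, j) \<in> R ^^ K i j" by metis
  define m where "m = Suc (\<Sum>i<n. \<Sum>j<n. K i j)"
  have Kle: "K i j \<le> m" if "i < n" "j < n" for i j
  proof -
    have "K i j \<le> (\<Sum>j<n. K i j)" using that by (intro member_le_sum) auto
    also have "\<dots> \<le> (\<Sum>i<n. \<Sum>j<n. K i j)" using that by (intro member_le_sum[of i "{..<n}" "\<lambda>i. \<Sum>j<n. K i j"]) auto
    finally show ?thesis unfolding m_def by simp
  qed
  show ?thesis
  proof (intro exI conjI allI impI)
    show "0 < m" unfolding m_def by simp
    fix v :: "nat \<Rightarrow> real" and i j assume v: "\<forall>l<n. 0 \<le> v l" and i: "i < n" and j: "j < n"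
    have w: "\<delta> ^ K i j * v j \<le> (Pop ^^ K i j) v i" by (rule walk[OF K[OF i j] i j v])
    have "\<delta> ^ (m - K i j) * (\<delta> ^ K i j * v j) \<le> (Pop ^^ (m - K i j + K i j)) v i"
      by (rule pad[OF v i _ w]) (use v j delta_pos in auto)
    then show "\<delta> ^ m * v j \<le> (Pop ^^ m) v i"
      using Kle[OF i j] by (simp add: power_add[symmetric] mult.assoc[symmetric])
  qed
qed

lemma Max_Min_in:
  fixes v :: "nat \<Rightarrow> real"
  shows "\<exists>i<n. v i = Max (v ` {..<n})" "\<exists>i<n. v i = Min (v ` {..<n})"
proof -
  have "0 \<in> {..<n}" using n1 by simp
  then have ne: "v ` {..<n} \<noteq> {}" by blast
  show "\<exists>i<n. v i = Max (v ` {..<n})" using Max_in[OF _ ne] by (metis finite_imageI finite_lessThan imageE lessThan_iff)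
  show "\<exists>i<n. v i = Min (v ` {..<n})" using Min_in[OF _ ne] by (metis finite_imageI finite_lessThan imageE lessThan_iff)
qed

lemma le_Max': "i < n \<Longrightarrow> v i \<le> Max (v ` {..<n})" by (intro Max_ge) auto
lemma Min_le': "i < n \<Longrightarrow> Min (v ` {..<n}) \<le> v i" by (intro Min_le) auto

lemma spr_nonneg: "0 \<le> spr v"
proof -
  have "0 < n" using n1 by simp
  have "Min (v ` {..<n}) \<le> v 0" by (rule Min_le'[OF \<open>0 < n\<close>])
  also have "v 0 \<le> Max (v ` {..<n})" by (rule le_Max'[OF \<open>0 < n\<close>])
  finally show ?thesis unfolding spr_def by simp
qed

lemma contract:
  assumes mix: "\<forall>v. (\<forall>l<n. 0 \<le> v l) \<longrightarrow> (\<forall>i<n. \<forall>j<n. \<epsilon> * v j \<le> W v i)"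
    and aff: "\<And>a b v i. i < n \<Longrightarrow> W (\<lambda>j. a * v j + b) i = a * W v i + b"
  shows "spr (W v) \<le> (1 - 2 * \<epsilon>) * spr v"
proof -
  define Mx where "Mx = Max (v ` {..<n})"
  define mn where "mn = Min (v ` {..<n})"
  obtain jM where jM: "jM < n" "v jM = Mx" using Max_Min_in(1)[of v] unfolding Mx_def by blast
  obtain jm where jm: "jm < n" "v jm = mn" using Max_Min_in(2)[of v] unfolding mn_def by blast
  have up: "W v i \<le> Mx - \<epsilon> * (Mx - mn)" if i: "i < n" for i
  proof -
    have nn: "\<forall>l<n. 0 \<le> (-1) * v l + Mx" using le_Max' unfolding Mx_def by simp
    have e1: "\<epsilon> * ((-1) * v jm + Mx) \<le> W (\<lambda>j. (-1) * v j + Mx) i"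
      by (rule mix[rule_format]) (use nn i jm(1) in auto)
    show ?thesis using e1 aff[OF i, of "-1" v Mx] jm by simp
  qed
  have lo: "mn + \<epsilon> * (Mx - mn) \<le> W v i" if i: "i < n" for i
  proof -
    have nn: "\<forall>l<n. 0 \<le> 1 * v l + (- mn)" using Min_le' unfolding mn_def by simp
    have e1: "\<epsilon> * (1 * v jM + (- mn)) \<le> W (\<lambda>j. 1 * v j + (- mn)) i"
      by (rule mix[rule_format]) (use nn i jM(1) in auto)
    show ?thesis using e1 aff[OF i, of 1 v "- mn"] jM by simp
  qed
  obtain i1 where i1: "i1 < n" "W v i1 = Max (W v ` {..<n})" using Max_Min_in(1) by blast
  obtain i2 where i2: "i2 < n" "W v i2 = Min (W v ` {..<n})" using Max_Min_in(2) by blast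
  have "spr (W v) = W v i1 - W v i2" unfolding spr_def using i1 i2 by simp
  also have "\<dots> \<le> (Mx - \<epsilon> * (Mx - mn)) - (mn + \<epsilon> * (Mx - mn))" using up[OF i1(1)] lo[OF i2(1)] by simp
  also have "\<dots> = (1 - 2 * \<epsilon>) * spr v" unfolding spr_def Mx_def mn_def by (simp add: algebra_simps)
  finally show ?thesis .
qed

lemma spr_pert:
  assumes "\<forall>i<n. \<bar>w i - x i\<bar> \<le> B"
  shows "spr w \<le> spr x + 2 * B"
proof -
  obtain i1 where i1: "i1 < n" "w i1 = Max (w ` {..<n})" using Max_Min_in(1) by blast
  obtain i2 where i2: "i2 < n" "w i2 = Min (w ` {..<n})" using Max_Min_in(2) by blast
  have "w i1 \<le> x i1 + B" "x i2 - B \<le> w i2" using assms i1 i2 by (auto simp: abs_le_iff)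
  moreover have "x i1 \<le> Max (x ` {..<n})" "Min (x ` {..<n}) \<le> x i2" using i1 i2 le_Max' Min_le' by auto
  ultimately show ?thesis unfolding spr_def using i1 i2 by linarith
qed

end



context cons begin

definition uu where "uu s e k i = s i * e i k - h * (\<Sum>j<n. laplacian n A i j * e j k)"
definition UU where "UU s e k = (\<Sum>i<n. \<bar>uu s e k i\<bar>)"

lemma delta_sum: "i < n \<Longrightarrow> (\<Sum>j<n. (if i = j then 1 else 0) * v j) = (v i :: real)"
proof -
  assume i: "i < n"
  have "(\<Sum>j<n. (if i = j then 1 else 0) * v j) = (\<Sum>j<n. if i = j then v j else 0)" by (intro sum.cong) auto
  then show ?thesis using i by simp
qed

lemma Pop_th: "i < n \<Longrightarrow> Pop v i = v i - h * (\<Sum>j<n. laplacian n A i j * v j)"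
  by (simp add: Pop_apply P_def left_diff_distrib sum_subtractf sum_distrib_left mult.assoc delta_sum)

lemma step: "i < n \<Longrightarrow> dp_theta n A h s th0 e (Suc k) i = Pop (dp_theta n A h s th0 e k) i + uu s e k i"
  by (simp add: Pop_th uu_def distrib_left sum.distrib algebra_simps)

lemma Pop_add: "i < n \<Longrightarrow> (\<forall>j<n. w j = x j + y j) \<Longrightarrow> Pop w i = Pop x i + Pop y i"
  by (simp add: Pop_apply distrib_left sum.distrib)

lemma Pop_bound: "i < n \<Longrightarrow> (\<forall>j<n. \<bar>r j\<bar> \<le> B) \<Longrightarrow> \<bar>Pop r i\<bar> \<le> B"
proof -
  assume i: "i < n" and r: "\<forall>j<n. \<bar>r j\<bar> \<le> B"
  have "\<bar>Pop r i\<bar> \<le> (\<Sum>j<n. \<bar>P i j * r j\<bar>)" unfolding Pop_apply by (rule sum_abs)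
  also have "\<dots> \<le> (\<Sum>j<n. P i j * B)"
    using r i P_nonneg by (intro sum_mono) (auto simp: abs_mult intro!: mult_left_mono)
  also have "\<dots> = B" using P_row[OF i] by (simp add: sum_distrib_right[symmetric])
  finally show ?thesis .
qed

lemma mstep: "\<exists>r. (\<forall>i<n. dp_theta n A h s th0 e (k + l) i = (Pop ^^ l) (dp_theta n A h s th0 e k) i + r i)
   \<and> (\<forall>i<n. \<bar>r i\<bar> \<le> (\<Sum>t<l. UU s e (k + t)))"
proof (induction l)
  case 0 show ?case by (intro exI[of _ "\<lambda>_. 0"]) (simp add: sum_nonneg)
next
  case (Suc l)
  let ?th = "dp_theta n A h s th0 e"
  from Suc obtain r where r1: "\<forall>i<n. ?th (k + l) i = (Pop ^^ l) (?th k) i + r i"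
    and r2: "\<forall>i<n. \<bar>r i\<bar> \<le> (\<Sum>t<l. UU s e (k + t))" by blast
  show ?case
  proof (intro exI[of _ "\<lambda>i. Pop r i + uu s e (k + l) i"] conjI allI impI)
    fix i assume i: "i < n"
    have "?th (k + Suc l) i = Pop (?th (k + l)) i + uu s e (k + l) i"
      using step[OF i] by simp
    also have "Pop (?th (k + l)) i = Pop ((Pop ^^ l) (?th k)) i + Pop r i"
      by (rule Pop_add[OF i r1])
    finally show "?th (k + Suc l) i = (Pop ^^ Suc l) (?th k) i + (Pop r i + uu s e (k + l) i)" by simp
  next
    fix i assume i: "i < n"
    have "\<bar>uu s e (k + l) i\<bar> \<le> UU s e (k + l)" unfolding UU_def using i by (intro member_le_sum) auto
    then show "\<bar>Pop r i + uu s e (k + l) i\<bar> \<le> (\<Sum>t<Suc l. UU s e (k + t))"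
      using Pop_bound[OF i r2] by simp
  qed
qed

lemma sum_step: "(\<Sum>i<n. dp_theta n A h s th0 e (Suc k) i) = (\<Sum>i<n. dp_theta n A h s th0 e k i) + (\<Sum>i<n. s i * e i k)"
proof -
  have z: "(\<Sum>i<n. \<Sum>j<n. laplacian n A i j * X j) = 0" for X
  proof -
    have "(\<Sum>i<n. \<Sum>j<n. laplacian n A i j * X j) = (\<Sum>j<n. (\<Sum>i<n. laplacian n A i j) * X j)"
      by (subst sum.swap) (simp add: sum_distrib_right)
    also have "\<dots> = 0" by (simp add: L_col)
    finally show ?thesis .
  qed
  show ?thesis
    by (simp add: sum.distrib sum_subtractf sum_distrib_left[symmetric] z)
qed

lemma sum_th: "(\<Sum>i<n. dp_theta n A h s th0 e k i) = (\<Sum>i<n. th0 i) + (\<Sum>t<k. \<Sum>i<n. s i * e i t)"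
  by (induction k) (simp_all add: sum_step del: dp_theta.simps(2))

lemma Ave_bounds: "Min (v ` {..<n}) \<le> Ave n v \<and> Ave n v \<le> Max (v ` {..<n})"
proof -
  have np: "0 < real n" using n1 by simp
  have "(\<Sum>i<n. v i) \<le> of_nat (card {..<n::nat}) * Max (v ` {..<n})"
    by (rule sum_bounded_above) (rule le_Max', simp)
  moreover have "of_nat (card {..<n::nat}) * Min (v ` {..<n}) \<le> (\<Sum>i<n. v i)"
    by (rule sum_bounded_below) (rule Min_le', simp)
  ultimately show ?thesis using np unfolding Ave_def by (simp add: field_simps)
qed

theorem det:
  assumes sm: "\<forall>i<n. summable (\<lambda>j. e i j)"
  shows "\<forall>i<n. (\<lambda>k. dp_theta n A h s th0 e k i)
            \<longlonglongrightarrow> (Ave n th0 + (\<Sum>i'<n. s i' / real n * (\<Sum>j. e i' j)))"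
proof -
  let ?th = "dp_theta n A h s th0 e"
  define L where "L = Ave n th0 + (\<Sum>i'<n. s i' / real n * (\<Sum>j. e i' j))"
  have np: "0 < real n" using n1 by simp
  have ave: "(\<lambda>k. Ave n (?th k)) \<longlonglongrightarrow> L"
  proof -
    have eq: "Ave n (?th k) = ((\<Sum>i<n. th0 i) + (\<Sum>i<n. s i * (\<Sum>t<k. e i t))) / real n" for k
      unfolding Ave_def sum_th by (subst sum.swap) (simp add: sum_distrib_left)
    have "(\<lambda>k. ((\<Sum>i<n. th0 i) + (\<Sum>i<n. s i * (\<Sum>t<k. e i t))) / real n)
        \<longlonglongrightarrow> ((\<Sum>i<n. th0 i) + (\<Sum>i<n. s i * (\<Sum>j. e i j))) / real n"
      using sm np by (intro tendsto_intros summable_LIMSEQ) auto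
    moreover have "((\<Sum>i<n. th0 i) + (\<Sum>i<n. s i * (\<Sum>j. e i j))) / real n = L"
      unfolding L_def Ave_def by (simp add: add_divide_distrib sum_divide_distrib)
    ultimately show ?thesis unfolding eq by simp
  qed
  obtain mm where mm: "0 < mm" and mix: "\<forall>v. (\<forall>l<n. 0 \<le> v l) \<longrightarrow> (\<forall>i<n. \<forall>j<n. \<delta> ^ mm * v j \<le> (Pop ^^ mm) v i)"
    using uniform by blast
  define \<epsilon> where "\<epsilon> = \<delta> ^ mm"
  have epos: "0 < \<epsilon>" unfolding \<epsilon>_def using delta_pos by simp
  define rr where "rr = max 0 (1 - 2 * \<epsilon>)"
  define b where "b k = 2 * (\<Sum>t<mm. UU s e (k + t))" for k
  have uz: "(\<lambda>t. uu s e t i) \<longlonglongrightarrow> 0" if i: "i < n" for i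
  proof -
    have ez: "(\<lambda>t. e j t) \<longlonglongrightarrow> 0" if "j < n" for j using sm that summable_LIMSEQ_zero by blast
    have "(\<lambda>t. s i * e i t - h * (\<Sum>j<n. laplacian n A i j * e j t)) \<longlonglongrightarrow> s i * 0 - h * (\<Sum>j<n. laplacian n A i j * 0)"
      by (intro tendsto_intros ez i) auto
    then show ?thesis unfolding uu_def by simp
  qed
  have Uz: "(\<lambda>t. UU s e t) \<longlonglongrightarrow> 0"
  proof -
    have "(\<lambda>t. \<Sum>i<n. \<bar>uu s e t i\<bar>) \<longlonglongrightarrow> (\<Sum>i<n. \<bar>0\<bar>)"
      by (intro tendsto_intros uz) auto
    then show ?thesis unfolding UU_def by simp
  qed
  have bz: "b \<longlonglongrightarrow> 0"
  proof -
    have "(\<lambda>k. 2 * (\<Sum>t<mm. UU s e (k + t))) \<longlonglongrightarrow> 2 * (\<Sum>t<mm. 0)"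
      by (intro tendsto_intros LIMSEQ_ignore_initial_segment[OF Uz])
    then show ?thesis unfolding b_def by simp
  qed
  define a where "a k = spr (?th k)" for k
  have rec: "\<forall>k. a (k + mm) \<le> rr * a k + b k"
  proof
    fix k
    obtain r where r1: "\<forall>i<n. ?th (k + mm) i = (Pop ^^ mm) (?th k) i + r i"
      and r2: "\<forall>i<n. \<bar>r i\<bar> \<le> (\<Sum>t<mm. UU s e (k + t))" using mstep by blast
    have "a (k + mm) \<le> spr ((Pop ^^ mm) (?th k)) + 2 * (\<Sum>t<mm. UU s e (k + t))"
      unfolding a_def by (rule spr_pert) (use r1 r2 in simp)
    also have "spr ((Pop ^^ mm) (?th k)) \<le> (1 - 2 * \<epsilon>) * a k"
      unfolding a_def \<epsilon>_def by (rule contract[OF mix Pop_affine])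
    also have "(1 - 2 * \<epsilon>) * a k \<le> rr * a k"
      unfolding rr_def a_def using spr_nonneg by (intro mult_right_mono) auto
    finally show "a (k + mm) \<le> rr * a k + b k" unfolding b_def by simp
  qed
  have az: "a \<longlonglongrightarrow> 0"
    by (rule seq_contract[OF _ rec _ _ mm bz]) (use spr_nonneg epos in \<open>auto simp: a_def rr_def\<close>)
  show ?thesis
  proof (intro allI impI)
    fix i assume i: "i < n"
    have d: "(\<lambda>k. ?th k i - Ave n (?th k)) \<longlonglongrightarrow> 0"
    proof (rule Lim_null_comparison[OF _ az])
      show "\<forall>\<^sub>F k in sequentially. norm (?th k i - Ave n (?th k)) \<le> a k"
      proof (intro always_eventually allI)
        fix k
        have "Min (?th k ` {..<n}) \<le> ?th k i" "?th k i \<le> Max (?th k ` {..<n})"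
          using i le_Max' Min_le' by auto
        then show "norm (?th k i - Ave n (?th k)) \<le> a k"
          using Ave_bounds[of "?th k"] unfolding a_def spr_def by auto
      qed
    qed
    have "(\<lambda>k. Ave n (?th k) + (?th k i - Ave n (?th k))) \<longlonglongrightarrow> L + 0"
      by (intro tendsto_add ave d)
    then show "(\<lambda>k. ?th k i) \<longlonglongrightarrow> (Ave n th0 + (\<Sum>i'<n. s i' / real n * (\<Sum>j. e i' j)))"
      unfolding L_def by simp
  qed
qed

end

theorem mainTheorem2:
  fixes M :: "'a measure" and n :: nat and A :: "nat \<Rightarrow> nat \<Rightarrow> real"
    and h :: real and s c q :: "nat \<Rightarrow> real" and theta0 :: "nat \<Rightarrow> real"
    and eta :: "nat \<Rightarrow> nat \<Rightarrow> 'a \<Rightarrow> real"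
  assumes "prob_space M"
    and "n \<ge> 1"
    and "connected_wgraph n A"
    and "0 < h" and "h * dmax n A < 1"
    and "\<forall>i<n. 0 < s i \<and> s i < 2"
    and "\<forall>i<n. 0 < c i"
    and "\<forall>i<n. \<bar>s i - 1\<bar> < q i \<and> q i < 1"
    and "prob_space.indep_vars M (\<lambda>_. borel) (\<lambda>p. eta (fst p) (snd p)) ({..<n} \<times> UNIV)"
    and "\<forall>i<n. \<forall>k. distributed M lborel (eta i k)
                     (\<lambda>x. ennreal (lap_density (c i * q i ^ k) x))"
  shows "AE \<omega> in M.
           (\<forall>i<n. summable (\<lambda>j. eta i j \<omega>)) \<and>
           (\<forall>i<n. (\<lambda>k. dp_theta n A h s theta0 (\<lambda>i' k'. eta i' k' \<omega>) k i)
                  \<longlonglongrightarrow> (Ave n theta0 + (\<Sum>i'<n. s i' / real n * (\<Sum>j. eta i' j \<omega>))))"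
proof -
  interpret cons n A h using assms(2-5) by unfold_locales auto
  have "AE \<omega> in M. \<forall>i\<in>{..<n}. summable (\<lambda>j. eta i j \<omega>)"
  proof (rule AE_finite_allI)
    fix i assume "i \<in> {..<n}"
    then have i: "i < n" by simp
    have q: "0 < q i" "q i < 1" using assms(8) i by (auto intro: le_less_trans[OF abs_ge_zero])
    show "AE \<omega> in M. summable (\<lambda>j. eta i j \<omega>)"
      by (rule summable_noise[OF assms(1) q, where c="c i" and X="eta i"]) (use assms(7,10) i in auto)
  qed simp
  then show ?thesis
  proof eventually_elim
    case (elim \<omega>)
    then have sm: "\<forall>i<n. summable (\<lambda>j. (\<lambda>i' k'. eta i' k' \<omega>) i j)" by simp
    show ?case using det[OF sm, of s theta0] elim by simp
  qed
qed

end
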